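(* Let $S\in\mathbb{S}^d_m$, $G\in\mathcal{M}(S)$, and let $F$ be a closed set in $\mathbb{R}^d$. Then $F\subset G$ if and only if $\psi_F\le\psi_G$.
   Context: $\mathbb{S}^d_m$: symmetric invertible $d\times d$ real matrices with exactly $m$ positive eigenvalues; $S(x,y):=\langle x,Sy\rangle$. $G$ is $S$-monotone if $S(x-y,x-y)\ge0$ for $x,y\in G$; maximal if not a strict subset of another $S$-monotone set; $\mathcal{M}(S)$ = family of maximal $S$-monotone sets. For a set $F$, $\psi_F(y):=\sup_{x\in F}(S(x,y)-\frac12S(x,x))$, $y\in\mathbb{R}^d$. *)

theory Defs
  imports "HOL-Analysis.Analysis"
begin

text \<open>Number of positive eigenvalues (counted with multiplicity) of a symmetric matrix:
  the dimension of the span of all eigenvectors with positive eigenvalues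
  (for symmetric matrices geometric and algebraic multiplicities agree).\<close>
definition pos_eig_count :: "real^'n^'n \<Rightarrow> nat" where
  "pos_eig_count S = dim (span {v. \<exists>c>0. S *v v = c *\<^sub>R v})"

definition Sdm :: "nat \<Rightarrow> (real^'n^'n) set" where
  "Sdm m = {S. transpose S = S \<and> invertible S \<and> pos_eig_count S = m}"

definition Sform :: "real^'n^'n \<Rightarrow> real^'n \<Rightarrow> real^'n \<Rightarrow> real" where
  "Sform S x y = x \<bullet> (S *v y)"

definition S_monotone :: "real^'n^'n \<Rightarrow> (real^'n) set \<Rightarrow> bool" where
  "S_monotone S G \<longleftrightarrow> (\<forall>x\<in>G. \<forall>y\<in>G. Sform S (x - y) (x - y) \<ge> 0)"

definition max_S_monotone :: "real^'n^'n \<Rightarrow> (real^'n) set set" where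
  "max_S_monotone S = {G. S_monotone S G \<and> (\<forall>H. S_monotone S H \<and> G \<subseteq> H \<longrightarrow> H = G)}"

text \<open>psi_F(y) = sup_{x in F} (S(x,y) - S(x,x)/2), valued in the extended reals
  (+infinity allowed; the empty supremum is -infinity).\<close>
definition psi :: "real^'n^'n \<Rightarrow> (real^'n) set \<Rightarrow> real^'n \<Rightarrow> ereal" where
  "psi S F y = (SUP x\<in>F. ereal (Sform S x y - Sform S x x / 2))"

end

theory Submission
  imports Defs
begin

lemma Sform_sym:
  assumes "transpose S = S"
  shows "Sform S x y = Sform S y x"
proof -
  have "x \<bullet> (S *v y) = (x v* S) \<bullet> y" by (simp add: dot_lmul_matrix)
  also have "x v* S = transpose S *v x" by (simp add: transpose_matrix_vector)
  finally show ?thesis unfolding Sform_def using assms by (simp add: inner_commute)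
qed

lemma Sform_diff:
  assumes "transpose S = S"
  shows "Sform S (z - w) (z - w) = Sform S z z - 2 * Sform S w z + Sform S w w"
proof -
  have "Sform S (z - w) (z - w) = Sform S z z - Sform S z w - Sform S w z + Sform S w w"
    unfolding Sform_def by (simp add: matrix_vector_mult_diff_distrib inner_diff_left inner_diff_right)
  then show ?thesis using Sform_sym[OF assms, of z w] by simp
qed

theorem lemma12:
  fixes S :: "real^'n^'n" and G F :: "(real^'n) set" and m :: nat
  assumes "S \<in> Sdm m"
    and "G \<in> max_S_monotone S"
    and "closed F"
  shows "F \<subseteq> G \<longleftrightarrow> (\<forall>y. psi S F y \<le> psi S G y)"
proof
  assume "F \<subseteq> G"
  then show "\<forall>y. psi S F y \<le> psi S G y" unfolding psi_def by (auto intro: SUP_subset_mono)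
next
  assume H: "\<forall>y. psi S F y \<le> psi S G y"
  have sym: "transpose S = S" using assms(1) unfolding Sdm_def by auto
  have mon: "S_monotone S G" and maxi: "\<And>H. S_monotone S H \<Longrightarrow> G \<subseteq> H \<Longrightarrow> H = G"
    using assms(2) unfolding max_S_monotone_def by auto
  show "F \<subseteq> G"
  proof
    fix x assume xF: "x \<in> F"
    show "x \<in> G"
    proof (rule ccontr)
      assume xG: "x \<notin> G"
      have "\<exists>z\<in>G. Sform S (x - z) (x - z) < 0"
      proof (rule ccontr)
        assume "\<not> ?thesis"
        then have a: "\<forall>z\<in>G. Sform S (x - z) (x - z) \<ge> 0" by (auto simp: not_less)
        have "S_monotone S (insert x G)"
          unfolding S_monotone_def
        proof (intro ballI)
          fix u v assume "u \<in> insert x G" "v \<in> insert x G"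
          moreover have "Sform S (z - x) (z - x) = Sform S (x - z) (x - z)" for z
            using Sform_diff[OF sym, of z x] Sform_diff[OF sym, of x z] Sform_sym[OF sym, of x z] by simp
          ultimately show "Sform S (u - v) (u - v) \<ge> 0"
            using a mon unfolding S_monotone_def by (auto simp: Sform_def)
        qed
        with maxi[of "insert x G"] xG show False by auto
      qed
      then obtain z where zG: "z \<in> G" and neg: "Sform S (x - z) (x - z) < 0" by auto
      have "psi S G z \<le> ereal (Sform S z z / 2)"
        unfolding psi_def
      proof (rule SUP_least)
        fix w assume "w \<in> G"
        then have "Sform S (z - w) (z - w) \<ge> 0" using mon zG unfolding S_monotone_def by auto
        then show "ereal (Sform S w z - Sform S w w / 2) \<le> ereal (Sform S z z / 2)"
          using Sform_diff[OF sym, of z w] by simp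
      qed
      moreover have "ereal (Sform S x z - Sform S x x / 2) \<le> psi S F z"
        unfolding psi_def using xF by (rule SUP_upper2) simp
      moreover have "Sform S x z - Sform S x x / 2 > Sform S z z / 2"
        using neg Sform_diff[OF sym, of x z] Sform_sym[OF sym, of x z] by simp
      ultimately show False using H[rule_format, of z] by (metis ereal_less_eq(3) not_le order.trans)
    qed
  qed
qed

end
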